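(* Let $k\ge 0$ and $n>2k+1$ be integers, and let $\sigma$ be a maximal simplex of $\mathrm{VR}(\mathbb{Z}^2;k)$. Then $\pi_n(\sigma)$ is a maximal simplex of $\mathrm{VR}(T_{n,n};k)$.
   Context: $\mathbb{Z}^2$ carries the $l^1$ metric. $T_{n,n}=\mathbb{Z}^2/(n\mathbb{Z}\times n\mathbb{Z})$ with quotient map $\pi_n$ (reduction of both coordinates mod $n$) and quotient metric $d([x],[y])=\min\{d(x',y'): \pi_n(x')=[x],\pi_n(y')=[y]\}$. $\mathrm{VR}(X;r)$ is the simplicial complex on vertex set $X$ whose simplices are the finite nonempty subsets of diameter at most $r$; a maximal simplex is one not properly contained in another simplex. *)

theory Defs
  imports Main
begin

definition l1_dist :: "int \<times> int \<Rightarrow> int \<times> int \<Rightarrow> int" where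
  "l1_dist p q = \<bar>fst p - fst q\<bar> + \<bar>snd p - snd q\<bar>"

text \<open>Quotient map Z^2 -> T_{n,n}; classes represented by residues in [0,n)^2\<close>
definition torus_proj :: "int \<Rightarrow> int \<times> int \<Rightarrow> int \<times> int" where
  "torus_proj n p = (fst p mod n, snd p mod n)"

definition torus_dist :: "int \<Rightarrow> int \<times> int \<Rightarrow> int \<times> int \<Rightarrow> int" where
  "torus_dist n a b = int (LEAST d. \<exists>x y. torus_proj n x = a \<and> torus_proj n y = b
                                          \<and> d = nat (l1_dist x y))"

definition vr_simplex :: "'a set \<Rightarrow> ('a \<Rightarrow> 'a \<Rightarrow> 'b::linorder) \<Rightarrow> 'b \<Rightarrow> 'a set \<Rightarrow> bool" where
  "vr_simplex X d r \<sigma> \<longleftrightarrow> finite \<sigma> \<and> \<sigma> \<noteq> {} \<and> \<sigma> \<subseteq> X \<and> (\<forall>x\<in>\<sigma>. \<forall>y\<in>\<sigma>. d x y \<le> r)"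

definition vr_maximal_simplex :: "'a set \<Rightarrow> ('a \<Rightarrow> 'a \<Rightarrow> 'b::linorder) \<Rightarrow> 'b \<Rightarrow> 'a set \<Rightarrow> bool" where
  "vr_maximal_simplex X d r \<sigma> \<longleftrightarrow> vr_simplex X d r \<sigma> \<and>
     (\<forall>\<tau>. vr_simplex X d r \<tau> \<and> \<sigma> \<subseteq> \<tau> \<longrightarrow> \<tau> = \<sigma>)"

end

theory Submission
  imports Defs
begin

definition uu :: "int \<times> int \<Rightarrow> int" where "uu p = fst p + snd p"
definition vv :: "int \<times> int \<Rightarrow> int" where "vv p = fst p - snd p"

lemma l1_uv: "l1_dist p q = max \<bar>uu p - uu q\<bar> \<bar>vv p - vv q\<bar>"
  unfolding l1_dist_def uu_def vv_def max_def by arith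

lemma l1_sym: "l1_dist p q = l1_dist q p"
  unfolding l1_dist_def by simp

lemma l1_tri: "l1_dist p r \<le> l1_dist p q + l1_dist q r"
  unfolding l1_dist_def by simp

lemma l1_nonneg: "0 \<le> l1_dist p q"
  unfolding l1_dist_def by simp

lemma l1_zero: "l1_dist p q = 0 \<longleftrightarrow> p = q"
  unfolding l1_dist_def by (auto simp: prod_eq_iff)

lemma uv_step:
  assumes "du \<in> {-1,1::int}" "dv \<in> {-1,1::int}"
  shows "\<exists>p. uu p = uu s + du \<and> vv p = vv s + dv"
proof -
  obtain a b where s: "s = (a,b)" by fastforce
  show ?thesis using assms
  proof (elim insertE emptyE)
    assume "du = -1" "dv = -1" thus ?thesis
      by (intro exI[of _ "(a - 1, b)"]) (simp add: s uu_def vv_def)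
  next
    assume "du = -1" "dv = 1" thus ?thesis
      by (intro exI[of _ "(a, b - 1)"]) (simp add: s uu_def vv_def)
  next
    assume "du = 1" "dv = -1" thus ?thesis
      by (intro exI[of _ "(a, b + 1)"]) (simp add: s uu_def vv_def)
  next
    assume "du = 1" "dv = 1" thus ?thesis
      by (intro exI[of _ "(a + 1, b)"]) (simp add: s uu_def vv_def)
  qed
qed

lemma choose_dir:
  fixes f :: "int \<times> int \<Rightarrow> int"
  assumes diam: "\<forall>q\<in>S. \<forall>q'\<in>S. \<bar>f q - f q'\<bar> \<le> k"
    and s: "s \<in> S" and s0: "s0 \<in> S" and k: "1 \<le> k"
  shows "\<exists>d\<in>{-1,1}. (\<forall>q\<in>S. \<bar>f q - (f s + d)\<bar> \<le> k)
     \<and> (f s0 \<noteq> f s \<longrightarrow> \<bar>f s0 - (f s + d)\<bar> = \<bar>f s0 - f s\<bar> - 1)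
     \<and> (f s0 = f s \<longrightarrow> \<bar>f s0 - (f s + d)\<bar> = 1)"
proof -
  have D: "\<And>q. q \<in> S \<Longrightarrow> \<bar>f q - f s\<bar> \<le> k \<and> \<bar>f q - f s0\<bar> \<le> k"
    using diam s s0 by blast
  consider "f s0 > f s" | "f s0 < f s" | "f s0 = f s" by linarith
  then show ?thesis
  proof cases
    case 1
    have "\<forall>q\<in>S. \<bar>f q - (f s + 1)\<bar> \<le> k"
    proof
      fix q assume "q \<in> S" from D[OF this] 1 show "\<bar>f q - (f s + 1)\<bar> \<le> k" by linarith
    qed
    thus ?thesis using 1 by (intro bexI[of _ 1]) auto
  next
    case 2
    have "\<forall>q\<in>S. \<bar>f q - (f s + -1)\<bar> \<le> k"
    proof
      fix q assume "q \<in> S" from D[OF this] 2 show "\<bar>f q - (f s + -1)\<bar> \<le> k" by linarith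
    qed
    thus ?thesis using 2 by (intro bexI[of _ "-1"]) auto
  next
    case 3
    show ?thesis
    proof (cases "\<exists>q\<in>S. f q = f s - k")
      case True
      then obtain q0 where q0: "q0 \<in> S" "f q0 = f s - k" by blast
      have "\<forall>q\<in>S. \<bar>f q - (f s + -1)\<bar> \<le> k"
      proof
        fix q assume "q \<in> S"
        hence "\<bar>f q - f q0\<bar> \<le> k" "\<bar>f q - f s\<bar> \<le> k" using diam q0 s by blast+
        thus "\<bar>f q - (f s + -1)\<bar> \<le> k" using q0 k by linarith
      qed
      thus ?thesis using 3 by (intro bexI[of _ "-1"]) auto
    next
      case False
      have "\<forall>q\<in>S. \<bar>f q - (f s + 1)\<bar> \<le> k"
      proof
        fix q assume "q \<in> S"
        hence "\<bar>f q - f s\<bar> \<le> k" "f q \<noteq> f s - k" using D False by blast+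
        thus "\<bar>f q - (f s + 1)\<bar> \<le> k" using k by linarith
      qed
      thus ?thesis using 3 by (intro bexI[of _ 1]) auto
    qed
  qed
qed

lemma Y: fixes a b x y :: int
  assumes "a \<in> {-1,1}" "b \<in> {-1,1}" 
     "x \<noteq> 0 \<longrightarrow> \<bar>x - a\<bar> = \<bar>x\<bar> - 1"
     "x = 0 \<longrightarrow> \<bar>x - a\<bar> = 1"
     "y \<noteq> 0 \<longrightarrow> \<bar>y - b\<bar> = \<bar>y\<bar> - 1"
     "y = 0 \<longrightarrow> \<bar>y - b\<bar> = 1" "x - y = 2 * z" "x \<noteq> 0 \<or> y \<noteq> 0"
   shows "max \<bar>x - a\<bar> \<bar>y - b\<bar> = max \<bar>x\<bar> \<bar>y\<bar> - 1"
proof -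
  have ab: "\<bar>a\<bar> = 1" "\<bar>b\<bar> = 1" using assms(1,2) by auto
  consider "x \<noteq> 0" "y \<noteq> 0" | "x = 0" | "y = 0" by blast
  then show ?thesis
  proof cases
    case 1 thus ?thesis using assms(3,5) by (simp add: max_def)
  next
    case 2
    hence "y \<noteq> 0" "y = - 2 * z" using assms(7,8) by auto
    hence "\<bar>y\<bar> \<ge> 2" by (cases "z = 0") (auto simp: abs_mult)
    thus ?thesis using 2 assms(4,5) \<open>y \<noteq> 0\<close> by (simp add: max_def)
  next
    case 3
    hence "x \<noteq> 0" "x = 2 * z" using assms(7,8) by auto
    hence "\<bar>x\<bar> \<ge> 2" by (cases "z = 0") (auto simp: abs_mult)
    thus ?thesis using 3 assms(3,6) \<open>x \<noteq> 0\<close> by (simp add: max_def)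
  qed
qed

lemma step_lemma:
  assumes diam: "\<forall>q\<in>S. \<forall>q'\<in>S. l1_dist q q' \<le> k"
    and maxl: "\<And>p. (\<forall>q\<in>S. l1_dist p q \<le> k) \<Longrightarrow> p \<in> S"
    and s: "s \<in> S" and s0: "s0 \<in> S" and ne: "s \<noteq> s0"
  shows "\<exists>s''\<in>S. l1_dist s s'' = 1 \<and> l1_dist s0 s'' = l1_dist s0 s - 1"
proof -
  have "l1_dist s s0 \<noteq> 0" using ne l1_zero by blast
  moreover have "l1_dist s s0 \<le> k" using diam s s0 by blast
  ultimately have k: "1 \<le> k" using l1_nonneg[of s s0] by linarith
  have du: "\<forall>q\<in>S. \<forall>q'\<in>S. \<bar>uu q - uu q'\<bar> \<le> k" using diam by (simp add: l1_uv)
  have dv: "\<forall>q\<in>S. \<forall>q'\<in>S. \<bar>vv q - vv q'\<bar> \<le> k" using diam by (simp add: l1_uv)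
  obtain a where a: "a \<in> {-1,1}" "\<forall>q\<in>S. \<bar>uu q - (uu s + a)\<bar> \<le> k"
     "uu s0 \<noteq> uu s \<longrightarrow> \<bar>uu s0 - (uu s + a)\<bar> = \<bar>uu s0 - uu s\<bar> - 1"
     "uu s0 = uu s \<longrightarrow> \<bar>uu s0 - (uu s + a)\<bar> = 1"
    using choose_dir[OF du s s0 k] by blast
  obtain b where b: "b \<in> {-1,1}" "\<forall>q\<in>S. \<bar>vv q - (vv s + b)\<bar> \<le> k"
     "vv s0 \<noteq> vv s \<longrightarrow> \<bar>vv s0 - (vv s + b)\<bar> = \<bar>vv s0 - vv s\<bar> - 1"
     "vv s0 = vv s \<longrightarrow> \<bar>vv s0 - (vv s + b)\<bar> = 1"
    using choose_dir[OF dv s s0 k] by blast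
  obtain p where p: "uu p = uu s + a" "vv p = vv s + b" using uv_step[OF a(1) b(1)] by blast
  have "p \<in> S"
  proof (rule maxl, rule ballI)
    fix q assume "q \<in> S"
    thus "l1_dist p q \<le> k" using a(2) b(2) p by (auto simp: l1_uv abs_minus_commute)
  qed
  moreover have "l1_dist s p = 1" using p a(1) b(1) by (auto simp: l1_uv)
  moreover have "l1_dist s0 p = l1_dist s0 s - 1"
  proof -
    have par: "(uu s0 - uu s) - (vv s0 - vv s) = 2 * (snd s0 - snd s)"
      by (simp add: uu_def vv_def)
    have nz: "uu s0 \<noteq> uu s \<or> vv s0 \<noteq> vv s" using ne
      by (auto simp: uu_def vv_def prod_eq_iff)
    have e1: "uu s0 - uu p = (uu s0 - uu s) - a" "vv s0 - vv p = (vv s0 - vv s) - b"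
      using p by auto
    have e2: "uu s0 - (uu s + a) = (uu s0 - uu s) - a" "vv s0 - (vv s + b) = (vv s0 - vv s) - b"
      by auto
    have nz': "uu s0 - uu s \<noteq> 0 \<or> vv s0 - vv s \<noteq> 0" using nz by auto
    show ?thesis unfolding l1_uv e1
      by (rule Y[OF a(1) b(1) _ _ _ _ par nz']) (use a(3,4) b(3,4) e2 in auto)
  qed
  ultimately show ?thesis by blast
qed

lemma mod_eq_small:
  fixes n x y :: int
  assumes "x mod n = y mod n" "\<bar>x - y\<bar> < n"
  shows "x = y"
proof (rule ccontr)
  assume "x \<noteq> y"
  have "n dvd (x - y)" using assms(1) by (simp add: mod_eq_dvd_iff)
  hence "\<bar>n\<bar> \<le> \<bar>x - y\<bar>" using \<open>x \<noteq> y\<close> by (intro dvd_imp_le_int) auto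
  thus False using assms(2) by linarith
qed

lemma T1: "torus_dist n (torus_proj n x) (torus_proj n y) \<le> l1_dist x y"
proof -
  have "(LEAST d. \<exists>x' y'. torus_proj n x' = torus_proj n x \<and> torus_proj n y' = torus_proj n y
          \<and> d = nat (l1_dist x' y')) \<le> nat (l1_dist x y)"
    by (rule Least_le) blast
  thus ?thesis unfolding torus_dist_def using l1_nonneg[of x y] by linarith
qed

lemma T2:
  assumes "torus_dist n (torus_proj n x) (torus_proj n y0) \<le> k"
  shows "\<exists>y. torus_proj n y = torus_proj n y0 \<and> l1_dist x y \<le> k"
proof -
  let ?P = "\<lambda>d. \<exists>x' y'. torus_proj n x' = torus_proj n x \<and> torus_proj n y' = torus_proj n y0
          \<and> d = nat (l1_dist x' y')"
  have "?P (Least ?P)" by (rule LeastI[of _ "nat (l1_dist x y0)"]) blast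
  then obtain x' y' where xy: "torus_proj n x' = torus_proj n x" "torus_proj n y' = torus_proj n y0"
    "Least ?P = nat (l1_dist x' y')" by blast
  have le: "l1_dist x' y' \<le> k" using assms xy(3) l1_nonneg[of x' y'] unfolding torus_dist_def by linarith
  define y where "y = (fst y' + fst x - fst x', snd y' + snd x - snd x')"
  have e1: "fst x mod n = fst x' mod n" "snd x mod n = snd x' mod n"
    using xy(1) by (auto simp: torus_proj_def)
  have "(fst y' + fst x - fst x') mod n = fst y' mod n"
  proof -
    have "n dvd (fst x - fst x')" using e1(1) by (simp add: mod_eq_dvd_iff)
    then obtain j where "fst x - fst x' = n * j" by (elim dvdE)
    hence "fst y' + fst x - fst x' = fst y' + n * j" by linarith
    moreover have "(fst y' + n * j) mod n = fst y' mod n" by simp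
    ultimately show ?thesis by (simp only:)
  qed
  moreover have "(snd y' + snd x - snd x') mod n = snd y' mod n"
  proof -
    have "n dvd (snd x - snd x')" using e1(2) by (simp add: mod_eq_dvd_iff)
    then obtain j where "snd x - snd x' = n * j" by (elim dvdE)
    hence "snd y' + snd x - snd x' = snd y' + n * j" by linarith
    moreover have "(snd y' + n * j) mod n = snd y' mod n" by simp
    ultimately show ?thesis by (simp only:)
  qed
  ultimately have "torus_proj n y = torus_proj n y'" by (simp add: torus_proj_def y_def)
  moreover have "l1_dist x y = l1_dist x' y'" by (simp add: l1_dist_def y_def abs_minus_commute)
  ultimately show ?thesis using xy(2) le by metis
qed

lemma T3:
  assumes "torus_proj n y1 = torus_proj n y2" "l1_dist y1 y2 < n"
  shows "y1 = y2"
proof -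
  have "fst y1 mod n = fst y2 mod n" "snd y1 mod n = snd y2 mod n"
    using assms(1) by (auto simp: torus_proj_def)
  moreover have "\<bar>fst y1 - fst y2\<bar> < n" "\<bar>snd y1 - snd y2\<bar> < n"
    using assms(2) by (auto simp: l1_dist_def)
  ultimately show ?thesis using mod_eq_small by (metis prod_eq_iff)
qed

theorem lemma5p2:
  fixes k n :: int and \<sigma> :: "(int \<times> int) set"
  assumes "0 \<le> k" and "2 * k + 1 < n"
    and "vr_maximal_simplex UNIV l1_dist k \<sigma>"
  shows "vr_maximal_simplex (range (torus_proj n)) (torus_dist n) k (torus_proj n ` \<sigma>)"
proof -
  have fin: "finite \<sigma>" and nem: "\<sigma> \<noteq> {}" and diam: "\<forall>q\<in>\<sigma>. \<forall>q'\<in>\<sigma>. l1_dist q q' \<le> k"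
    and mx: "\<And>\<tau>. vr_simplex UNIV l1_dist k \<tau> \<Longrightarrow> \<sigma> \<subseteq> \<tau> \<Longrightarrow> \<tau> = \<sigma>"
    using assms(3) unfolding vr_maximal_simplex_def vr_simplex_def by auto
  have maxl: "p \<in> \<sigma>" if "\<forall>q\<in>\<sigma>. l1_dist p q \<le> k" for p
  proof -
    have "vr_simplex UNIV l1_dist k (insert p \<sigma>)"
      unfolding vr_simplex_def using fin diam that assms(1)
      by (auto simp: l1_sym[of _ p] l1_dist_def)
    hence "insert p \<sigma> = \<sigma>" using mx by blast
    thus ?thesis by blast
  qed
  have simp1: "vr_simplex (range (torus_proj n)) (torus_dist n) k (torus_proj n ` \<sigma>)"
  proof -
    have "\<forall>x\<in>torus_proj n ` \<sigma>. \<forall>y\<in>torus_proj n ` \<sigma>. torus_dist n x y \<le> k"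
    proof (intro ballI)
      fix x y assume "x \<in> torus_proj n ` \<sigma>" "y \<in> torus_proj n ` \<sigma>"
      then obtain a b where ab: "a \<in> \<sigma>" "b \<in> \<sigma>" "x = torus_proj n a" "y = torus_proj n b" by blast
      have "torus_dist n x y \<le> l1_dist a b" unfolding ab(3,4) by (rule T1)
      also have "\<dots> \<le> k" using diam ab(1,2) by blast
      finally show "torus_dist n x y \<le> k" .
    qed
    thus ?thesis unfolding vr_simplex_def using fin nem by blast
  qed
  moreover have "\<tau> = torus_proj n ` \<sigma>"
    if tau: "vr_simplex (range (torus_proj n)) (torus_dist n) k \<tau>" "torus_proj n ` \<sigma> \<subseteq> \<tau>" for \<tau>
  proof
    show "torus_proj n ` \<sigma> \<subseteq> \<tau>" by fact
    show "\<tau> \<subseteq> torus_proj n ` \<sigma>"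
    proof
      fix t assume t: "t \<in> \<tau>"
      then obtain t0 where t0: "t = torus_proj n t0" using tau(1) unfolding vr_simplex_def by blast
      have td: "\<And>s. s \<in> \<sigma> \<Longrightarrow> torus_dist n (torus_proj n s) (torus_proj n t0) \<le> k"
        using tau t t0 unfolding vr_simplex_def by blast
      obtain s0 where s0: "s0 \<in> \<sigma>" using nem by blast
      obtain t' where t': "torus_proj n t' = torus_proj n t0" "l1_dist s0 t' \<le> k"
        using T2[OF td[OF s0]] by blast
      have claim: "\<forall>s\<in>\<sigma>. nat (l1_dist s0 s) = m \<longrightarrow> l1_dist s t' \<le> k" for m
      proof (induction m)
        case 0
        show ?case
        proof (intro ballI impI)
          fix s assume "s \<in> \<sigma>" "nat (l1_dist s0 s) = 0"
          hence "s = s0" using l1_zero[of s0 s] l1_nonneg[of s0 s] by auto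
          thus "l1_dist s t' \<le> k" using t' by simp
        qed
      next
        case (Suc m)
        show ?case
        proof (intro ballI impI)
          fix s assume s: "s \<in> \<sigma>" "nat (l1_dist s0 s) = Suc m"
          hence "s \<noteq> s0" using l1_zero[of s0 s] by auto
          then obtain s'' where s'': "s'' \<in> \<sigma>" "l1_dist s s'' = 1" "l1_dist s0 s'' = l1_dist s0 s - 1"
            using step_lemma[OF diam maxl s(1) s0] by blast
          have "nat (l1_dist s0 s'') = m" using s(2) s''(3) by linarith
          hence ih: "l1_dist s'' t' \<le> k" using Suc s''(1) by blast
          obtain y where y: "torus_proj n y = torus_proj n t0" "l1_dist s y \<le> k"
            using T2[OF td[OF s(1)]] by blast
          have "l1_dist t' y \<le> l1_dist t' s'' + l1_dist s'' s + l1_dist s y"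
            using l1_tri[of t' y s''] l1_tri[of s'' y s] by linarith
          hence "l1_dist t' y < n" using ih s''(2) y(2) assms(2) l1_sym[of t' s''] l1_sym[of s'' s]
            by linarith
          hence "t' = y" using T3 t'(1) y(1) by metis
          thus "l1_dist s t' \<le> k" using y by simp
        qed
      qed
      have "\<forall>s\<in>\<sigma>. l1_dist t' s \<le> k" using claim l1_sym by metis
      hence "t' \<in> \<sigma>" by (rule maxl)
      thus "t \<in> torus_proj n ` \<sigma>" using t0 t'(1) by (metis image_eqI)
    qed
  qed
  ultimately show ?thesis unfolding vr_maximal_simplex_def by blast
qed

end
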